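(* Let $k,d$ be positive integers, let $D$ be a totally coloured digraph and let $A\subseteq V(D)$ be a $(3kd,d)$-connected subset of $D$. Let $S$ be a set of colours with $|S|\leq k$ and let $a_1,\dots,a_k\in A$ be vertices such that no $a_i$ has a colour in $S$ and $a_1,\dots,a_k$ have pairwise different colours. Then there is a rainbow path $P$ in $D$ from $a_1$ to $a_k$ of length at most $kd$ which passes through each of $a_1,\dots,a_k$ and has no vertex or edge with a colour in $S$.
   Context: Digraphs are finite, without loops and without multiple edges (an edge may appear in both directions). A path is a sequence of distinct vertices $x_1,\dots,x_t$ such that each $x_ix_{i+1}$ is a directed edge; its length is its number of edges. A total colouring assigns a colour to every vertex and every edge. A path (or subgraph) is rainbow if all its vertices and edges have pairwise different colours. For a totally coloured digraph $D$, a set $A\subseteq V(D)$ is $(k,d)$-connected in $D$ if for every set $S$ of at most $k-1$ colours and all vertices $x,y\in A$, there is a rainbow path from $x$ to $y$ of length at most $d$ that internally avoids $S$, i.e. none of its edges and none of its vertices other than $x$ and $y$ has a colour in $S$. *)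

theory Defs
  imports Main
begin

text \<open>A total colouring is a pair of functions: cv colours vertices, ce colours edges.\<close>

definition digraph :: "'a set \<Rightarrow> ('a \<times> 'a) set \<Rightarrow> bool" where
  "digraph V E \<longleftrightarrow> finite V \<and> E \<subseteq> V \<times> V \<and> (\<forall>x. (x, x) \<notin> E)"

definition path_edges :: "'a list \<Rightarrow> ('a \<times> 'a) list" where
  "path_edges p = zip p (tl p)"

definition is_path :: "'a set \<Rightarrow> ('a \<times> 'a) set \<Rightarrow> 'a list \<Rightarrow> bool" where
  "is_path V E p \<longleftrightarrow> p \<noteq> [] \<and> distinct p \<and> set p \<subseteq> V \<and> set (path_edges p) \<subseteq> E"

definition path_from_to :: "'a set \<Rightarrow> ('a \<times> 'a) set \<Rightarrow> 'a list \<Rightarrow> 'a \<Rightarrow> 'a \<Rightarrow> bool" where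
  "path_from_to V E p x y \<longleftrightarrow> is_path V E p \<and> hd p = x \<and> last p = y"

definition path_length :: "'a list \<Rightarrow> nat" where
  "path_length p = length p - 1"

definition rainbow :: "('a \<Rightarrow> 'c) \<Rightarrow> ('a \<times> 'a \<Rightarrow> 'c) \<Rightarrow> 'a list \<Rightarrow> bool" where
  "rainbow cv ce p \<longleftrightarrow> distinct (map cv p @ map ce (path_edges p))"

definition internally_avoids ::
  "('a \<Rightarrow> 'c) \<Rightarrow> ('a \<times> 'a \<Rightarrow> 'c) \<Rightarrow> 'c set \<Rightarrow> 'a \<Rightarrow> 'a \<Rightarrow> 'a list \<Rightarrow> bool" where
  "internally_avoids cv ce S x y p \<longleftrightarrow>
     (\<forall>e \<in> set (path_edges p). ce e \<notin> S) \<and> (\<forall>v \<in> set p - {x, y}. cv v \<notin> S)"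

definition kd_connected ::
  "'a set \<Rightarrow> ('a \<times> 'a) set \<Rightarrow> ('a \<Rightarrow> 'c) \<Rightarrow> ('a \<times> 'a \<Rightarrow> 'c) \<Rightarrow> nat \<Rightarrow> nat \<Rightarrow> 'a set \<Rightarrow> bool" where
  "kd_connected V E cv ce k d A \<longleftrightarrow>
     (\<forall>S. finite S \<and> card S \<le> k - 1 \<longrightarrow>
        (\<forall>x \<in> A. \<forall>y \<in> A. \<exists>p. path_from_to V E p x y \<and> rainbow cv ce p
            \<and> path_length p \<le> d \<and> internally_avoids cv ce S x y p))"

end

theory Submission
  imports Defs
begin

lemma pe_Nil[simp]: "path_edges [] = []" and pe_single[simp]: "path_edges [x] = []"
  and pe_cons2[simp]: "path_edges (x # y # zs) = (x, y) # path_edges (y # zs)"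
  by (simp_all add: path_edges_def)

lemma pe_append: "P \<noteq> [] \<Longrightarrow> last P = q \<Longrightarrow> path_edges (P @ qs) = path_edges P @ path_edges (q # qs)"
proof (induction P rule: induct_list012)
  case 1 then show ?case by simp
next
  case (2 x) then show ?case by simp
next
  case (3 x y zs) then show ?case by simp
qed

lemma length_pe: "length (path_edges P) = length P - 1"
  by (simp add: path_edges_def)

lemma arith_bound:
  fixes j k d :: nat
  assumes "1 \<le> j" "j + 1 \<le> k" "1 \<le> d"
  shows "k + (2 * ((j - 1) * d) + 1) + (k - j - 1) \<le> 3 * k * d - 1"
proof -
  obtain m where m: "j = m + 1" using assms by (metis add.commute le_add_diff_inverse)
  obtain n where n: "k = m + 2 + n" using assms m by (metis add.assoc le_add_diff_inverse one_add_one)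
  obtain e where e: "d = e + 1" using assms by (metis add.commute le_add_diff_inverse)
  show ?thesis unfolding m n e by (simp add: algebra_simps)
qed

theorem mainTheorem4:
  fixes V :: "'a set" and E :: "('a \<times> 'a) set"
    and cv :: "'a \<Rightarrow> 'c" and ce :: "'a \<times> 'a \<Rightarrow> 'c"
    and k d :: nat and A :: "'a set" and S :: "'c set" and a :: "nat \<Rightarrow> 'a"
  assumes "digraph V E"
    and "0 < k" and "0 < d"
    and "A \<subseteq> V"
    and "kd_connected V E cv ce (3 * k * d) d A"
    and "finite S" and "card S \<le> k"
    and "\<forall>i \<in> {1..k}. a i \<in> A"
    and "\<forall>i \<in> {1..k}. cv (a i) \<notin> S"
    and "\<forall>i \<in> {1..k}. \<forall>j \<in> {1..k}. i \<noteq> j \<longrightarrow> cv (a i) \<noteq> cv (a j)"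
  shows "\<exists>P. path_from_to V E P (a 1) (a k) \<and> rainbow cv ce P \<and> path_length P \<le> k * d
            \<and> (\<forall>i \<in> {1..k}. a i \<in> set P)
            \<and> (\<forall>v \<in> set P. cv v \<notin> S) \<and> (\<forall>e \<in> set (path_edges P). ce e \<notin> S)"
proof -
  note kc = assms(5)[unfolded kd_connected_def]
  define Inv where "Inv j P \<longleftrightarrow> path_from_to V E P (a 1) (a j) \<and> rainbow cv ce P
      \<and> length P \<le> (j - 1) * d + 1
      \<and> (\<forall>i \<in> {1..j}. a i \<in> set P)
      \<and> (\<forall>v \<in> set P. cv v \<notin> S) \<and> (\<forall>e \<in> set (path_edges P). ce e \<notin> S)
      \<and> (\<forall>i. j < i \<and> i \<le> k \<longrightarrow> (\<forall>v \<in> set P. cv v \<noteq> cv (a i)) \<and> (\<forall>e \<in> set (path_edges P). ce e \<noteq> cv (a i)))" for j P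
  have main: "1 \<le> j \<Longrightarrow> j \<le> k \<Longrightarrow> \<exists>P. Inv j P" for j
  proof (induction j)
    case 0 then show ?case by simp
  next
    case (Suc j)
    show ?case
    proof (cases "j = 0")
      case True
      have "Inv 1 [a 1]"
        unfolding Inv_def using assms(2,4,8,9,10)
        by (auto simp: path_from_to_def is_path_def rainbow_def)
      then show ?thesis using True by auto
    next
      case False
      then have j1: "1 \<le> j" by simp
      from Suc j1 obtain P where IP: "Inv j P" by auto
      have jk: "j + 1 \<le> k" using Suc by simp
      define S' where "S' = S \<union> cv ` set P \<union> ce ` set (path_edges P) \<union> (\<lambda>i. cv (a i)) ` {j+2..k}"
      have lenP: "length P \<le> (j - 1) * d + 1" using IP Inv_def by simp
      have fS': "finite S'" unfolding S'_def using assms(6) by simp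
      have "card S' \<le> card S + card (cv ` set P) + card (ce ` set (path_edges P)) + card ((\<lambda>i. cv (a i)) ` {j+2..k})"
        unfolding S'_def by (meson card_Un_le add_le_mono order_trans le_refl)
      also have "\<dots> \<le> k + length P + (length P - 1) + (k - j - 1)"
      proof -
        have "card (cv ` set P) \<le> length P"
          by (meson card_image_le card_length finite_set order_trans)
        moreover have "card (ce ` set (path_edges P)) \<le> length P - 1"
          by (metis card_image_le card_length finite_set order_trans length_pe)
        moreover have "card ((\<lambda>i. cv (a i)) ` {j+2..k}) \<le> k - j - 1"
          using card_image_le[of "{j+2..k}" "\<lambda>i. cv (a i)"] by simp
        ultimately show ?thesis using assms(7) by linarith
      qed
      also have "\<dots> \<le> k + (2 * ((j - 1) * d) + 1) + (k - j - 1)" using lenP by linarith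
      also have "\<dots> \<le> 3 * k * d - 1" using arith_bound[OF j1 jk] assms(3) by simp
      finally have cS': "card S' \<le> 3 * k * d - 1" .
      have ajA: "a j \<in> A" "a (j+1) \<in> A" using assms(8) j1 jk by auto
      obtain Q where Qp: "path_from_to V E Q (a j) (a (j+1))" and Qr: "rainbow cv ce Q"
        and Ql: "path_length Q \<le> d" and Qa: "internally_avoids cv ce S' (a j) (a (j+1)) Q"
        using kc fS' cS' ajA by blast
      have cdiff: "cv (a j) \<noteq> cv (a (j+1))" using assms(10) j1 jk by auto
      obtain qs where Qq: "Q = a j # qs"
        using Qp unfolding path_from_to_def is_path_def by (metis list.collapse)
      have qsne: "qs \<noteq> []" using Qp Qq cdiff unfolding path_from_to_def by auto
      have lastq: "last qs = a (j+1)" using Qp Qq qsne unfolding path_from_to_def by simp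
      have Pp: "path_from_to V E P (a 1) (a j)" and Pr: "rainbow cv ce P"
        and Pa: "\<forall>i \<in> {1..j}. a i \<in> set P" and PS: "\<forall>v \<in> set P. cv v \<notin> S" 
        and PSe: "\<forall>e \<in> set (path_edges P). ce e \<notin> S"
        and Pfut: "\<forall>i. j < i \<and> i \<le> k \<longrightarrow> (\<forall>v \<in> set P. cv v \<noteq> cv (a i)) \<and> (\<forall>e \<in> set (path_edges P). ce e \<noteq> cv (a i))"
        using IP unfolding Inv_def by auto
      have Pne: "P \<noteq> []" and lastP: "last P = a j" and hdP: "hd P = a 1"
        using Pp unfolding path_from_to_def is_path_def by auto
      have pe': "path_edges (P @ qs) = path_edges P @ path_edges Q"
        using pe_append[OF Pne lastP] Qq by simp
      have distQ: "distinct (a j # qs)" using Qp Qq unfolding path_from_to_def is_path_def by simp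
      have qsv: "v \<in> set qs \<Longrightarrow> v = a (j+1) \<or> cv v \<notin> S'" for v
        using Qa Qq distQ unfolding internally_avoids_def by auto
      have qse: "e \<in> set (path_edges Q) \<Longrightarrow> ce e \<notin> S'" for e
        using Qa unfolding internally_avoids_def by auto
      have fut1: "cv (a (j+1)) \<notin> cv ` set P" "cv (a (j+1)) \<notin> ce ` set (path_edges P)"
        using Pfut[rule_format, of "j+1"] jk by (auto simp del: One_nat_def)
      have aS: "cv (a (j+1)) \<notin> S" using assms(9) jk by auto
      have disj: "set P \<inter> set qs = {}"
      proof -
        { fix v assume v: "v \<in> set P" "v \<in> set qs"
          from qsv[OF v(2)] have False
          proof
            assume "v = a (j+1)" then show False using v fut1 by auto
          next
            assume "cv v \<notin> S'" then show False using v unfolding S'_def by auto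
          qed }
        then show ?thesis by blast
      qed
      have Q'p: "path_from_to V E (P @ qs) (a 1) (a (Suc j))"
        using Pp Qp Qq qsne lastq disj distQ pe' unfolding path_from_to_def is_path_def by auto
      have Qr': "distinct (map cv qs @ map ce (path_edges Q))" and cvaj: "cv (a j) \<notin> set (map cv qs @ map ce (path_edges Q))"
        using Qr Qq unfolding rainbow_def by auto
      have Pr': "distinct (map cv P @ map ce (path_edges P))" using Pr unfolding rainbow_def .
      have disjc: "set (map cv P @ map ce (path_edges P)) \<inter> set (map cv qs @ map ce (path_edges Q)) = {}"
      proof -
        { fix c assume c1: "c \<in> cv ` set P \<union> ce ` set (path_edges P)"
            and c2: "c \<in> cv ` set qs \<union> ce ` set (path_edges Q)"
          have "c \<in> S'" using c1 unfolding S'_def by auto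
          with c2 obtain v where "v \<in> set qs" "c = cv v" using qse by blast
          with qsv \<open>c \<in> S'\<close> have "c = cv (a (j+1))" by blast
          with c1 fut1 have False by auto }
        then show ?thesis by auto
      qed
      have rain': "rainbow cv ce (P @ qs)"
        unfolding rainbow_def pe' using Pr' Qr' disjc by auto
      have lenQ: "length Q \<le> d + 1" using Ql unfolding path_length_def by simp
      have len': "length (P @ qs) \<le> (Suc j - 1) * d + 1"
      proof -
        have "length (P @ qs) = length P + length Q - 1" using Qq by simp
        also have "\<dots> \<le> (j - 1) * d + 1 + d" using lenP lenQ by linarith
        also have "\<dots> = (Suc j - 1) * d + 1" using j1 by (cases j) auto
        finally show ?thesis .
      qed
      have a': "\<forall>i \<in> {1..Suc j}. a i \<in> set (P @ qs)"
      proof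
        fix i assume "i \<in> {1..Suc j}"
        then have "i \<in> {1..j} \<or> i = Suc j" by auto
        then show "a i \<in> set (P @ qs)" using Pa lastq qsne by (auto dest: last_in_set)
      qed
      have S1: "\<forall>v \<in> set (P @ qs). cv v \<notin> S"
        using PS qsv aS unfolding S'_def by auto
      have S2: "\<forall>e \<in> set (path_edges (P @ qs)). ce e \<notin> S"
        using PSe qse unfolding pe' S'_def by auto
      have F: "\<forall>i. Suc j < i \<and> i \<le> k \<longrightarrow> (\<forall>v \<in> set (P @ qs). cv v \<noteq> cv (a i)) \<and> (\<forall>e \<in> set (path_edges (P @ qs)). ce e \<noteq> cv (a i))"
      proof (intro allI impI conjI ballI)
        fix i assume i: "Suc j < i \<and> i \<le> k"
        have inS': "cv (a i) \<in> S'" using i unfolding S'_def by auto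
        have dif: "cv (a i) \<noteq> cv (a (j+1))" using assms(10) i j1 by auto
        fix v assume "v \<in> set (P @ qs)"
        then show "cv v \<noteq> cv (a i)" using Pfut i qsv[of v] inS' dif by auto
      next
        fix i assume i: "Suc j < i \<and> i \<le> k"
        have inS': "cv (a i) \<in> S'" using i unfolding S'_def by auto
        fix e assume "e \<in> set (path_edges (P @ qs))"
        then show "ce e \<noteq> cv (a i)" using Pfut i qse[of e] inS' unfolding pe' by auto
      qed
      have "Inv (Suc j) (P @ qs)"
        unfolding Inv_def using Q'p rain' len' a' S1 S2 F by blast
      then show ?thesis by blast
    qed
  qed
  obtain P where IP: "Inv k P" using main[of k] assms(2) by force
  have "length P - 1 \<le> k * d"
  proof -
    have "length P \<le> (k - 1) * d + 1" using IP Inv_def by simp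
    moreover have "(k - 1) * d \<le> k * d" by simp
    ultimately show ?thesis by linarith
  qed
  then show ?thesis using IP unfolding Inv_def path_length_def by blast
qed

end
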